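(* Let $D=\mathrm{diag}(d_1,\dots,d_n)\in\mathbb{D}^n_+$, $W\in\mathbb{R}^{n\times n}$, $u\in\mathbb{R}^n$, $A:=W-D$, $\mathcal X=\{x\in\mathbb{R}^n: Dx\in[0,1]^n\}$. Assume $A$ is Lyapunov diagonally stable with diagonal certificate $\Lambda\in\mathbb{D}^n_+$ ($A^\top\Lambda+\Lambda A\prec0$), and let $V_\infty(x)=\max_{\zeta\in\{0,1\}^n}(Ax+u)^\top\Lambda(\zeta-Dx)$. Then the unique equilibrium $x^\star$ of the hard-selector inclusion $x'\in-Dx+\mathcal H(Ax+u)$ on $\mathcal X$ is strongly globally asymptotically stable. More precisely, with $d_{\min}:=\min_i d_i>0$, every absolutely continuous solution $x:[0,\infty)\to\mathcal X$ of the inclusion (satisfying it for a.e. $s$) obeys, for all $0\le s_1\le s_2$, $$V_\infty(x(s_2))\le e^{-d_{\min}(s_2-s_1)}V_\infty(x(s_1)).$$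
   Context: $\mathbb{D}^n_+$ is the set of positive diagonal matrices. $h(z)=\{0\}$ if $z<0$, $[0,1]$ if $z=0$, $\{1\}$ if $z>0$, and $\mathcal H(x)=h(x_1)\times\cdots\times h(x_n)$. "Strongly globally asymptotically stable" means that every solution from every initial condition in $\mathcal X$ converges to $x^\star$ and $x^\star$ is Lyapunov stable for all solutions (solutions of the inclusion need not be unique). *)

theory Defs
  imports "HOL-Analysis.Analysis"
begin

definition pos_diag :: "real^'n^'n \<Rightarrow> bool" where
  "pos_diag M \<longleftrightarrow> (\<forall>i j. i \<noteq> j \<longrightarrow> M$i$j = 0) \<and> (\<forall>i. M$i$i > 0)"

definition neg_def :: "real^'n^'n \<Rightarrow> bool" where
  "neg_def M \<longleftrightarrow> (\<forall>x. x \<noteq> 0 \<longrightarrow> x \<bullet> (M *v x) < 0)"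

definition lds_cert :: "real^'n^'n \<Rightarrow> real^'n^'n \<Rightarrow> bool" where
  "lds_cert A Lam \<longleftrightarrow> pos_diag Lam \<and> neg_def (transpose A ** Lam + Lam ** A)"

definition hsel :: "real \<Rightarrow> real set" where
  "hsel z = (if z < 0 then {0} else if z = 0 then {0..1} else {1})"

definition Hsel :: "real^'n \<Rightarrow> (real^'n) set" where
  "Hsel z = {v. \<forall>i. v$i \<in> hsel (z$i)}"

definition Xset :: "real^'n^'n \<Rightarrow> (real^'n) set" where
  "Xset D = {x. \<forall>i. (D *v x)$i \<in> {0..1}}"

definition Finc :: "real^'n^'n \<Rightarrow> real^'n^'n \<Rightarrow> real^'n \<Rightarrow> real^'n \<Rightarrow> (real^'n) set" where
  "Finc D A u x = {- (D *v x) + h | h. h \<in> Hsel (A *v x + u)}"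

definition abs_cont_on :: "real \<Rightarrow> real \<Rightarrow> (real \<Rightarrow> 'a::real_normed_vector) \<Rightarrow> bool" where
  "abs_cont_on S T f \<longleftrightarrow>
     (\<forall>\<epsilon>>0. \<exists>\<delta>>0. \<forall>(m::nat) (a::nat\<Rightarrow>real) (b::nat\<Rightarrow>real).
        (\<forall>k<m. S \<le> a k \<and> a k \<le> b k \<and> b k \<le> T) \<longrightarrow>
        (\<forall>j<m. \<forall>k<m. j \<noteq> k \<longrightarrow> b j \<le> a k \<or> b k \<le> a j) \<longrightarrow>
        (\<Sum>k<m. b k - a k) < \<delta> \<longrightarrow>
        (\<Sum>k<m. norm (f (b k) - f (a k))) < \<epsilon>)"

definition is_solution :: "real^'n^'n \<Rightarrow> real^'n^'n \<Rightarrow> real^'n \<Rightarrow> (real \<Rightarrow> real^'n) \<Rightarrow> bool" where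
  "is_solution D A u x \<longleftrightarrow>
     (\<forall>t\<ge>0. x t \<in> Xset D) \<and>
     (\<forall>T\<ge>0. abs_cont_on 0 T x) \<and>
     (AE s in lborel. 0 < s \<longrightarrow>
        (\<exists>v. (x has_vector_derivative v) (at s) \<and> v \<in> Finc D A u (x s)))"

definition is_equilibrium :: "real^'n^'n \<Rightarrow> real^'n^'n \<Rightarrow> real^'n \<Rightarrow> real^'n \<Rightarrow> bool" where
  "is_equilibrium D A u xs \<longleftrightarrow> xs \<in> Xset D \<and> 0 \<in> Finc D A u xs"

definition strongly_GAS :: "real^'n^'n \<Rightarrow> real^'n^'n \<Rightarrow> real^'n \<Rightarrow> real^'n \<Rightarrow> bool" where
  "strongly_GAS D A u xs \<longleftrightarrow>
     (\<forall>x. is_solution D A u x \<longrightarrow> (x \<longlongrightarrow> xs) at_top) \<and>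
     (\<forall>\<epsilon>>0. \<exists>\<delta>>0. \<forall>x. is_solution D A u x \<longrightarrow> norm (x 0 - xs) < \<delta> \<longrightarrow>
        (\<forall>t\<ge>0. norm (x t - xs) < \<epsilon>))"

definition V_inf :: "real^'n^'n \<Rightarrow> real^'n^'n \<Rightarrow> real^'n \<Rightarrow> real^'n^'n \<Rightarrow> real^'n \<Rightarrow> real" where
  "V_inf D A u Lam x =
     Max ((\<lambda>\<zeta>. (A *v x + u) \<bullet> (Lam *v (\<zeta> - D *v x))) ` {\<zeta>. \<forall>i. \<zeta>$i \<in> {0,1}})"

end

theory Submission
  imports Defs
begin
lemma straddle_deriv:
  fixes g :: "real \<Rightarrow> real"
  assumes "(g has_real_derivative g') (at t)" "g' \<le> 0" "\<epsilon> > 0"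
  shows "\<exists>r>0. \<forall>u v. u \<le> t \<longrightarrow> t \<le> v \<longrightarrow> t - u < r \<longrightarrow> v - t < r \<longrightarrow> g v - g u \<le> \<epsilon> * (v - u)"
proof -
  from assms(1) have "(g has_derivative (\<lambda>h. h * g')) (at t)"
    by (simp add: has_field_derivative_def mult.commute[of _ g'])
  then obtain d where d: "d > 0" "\<And>y. norm (y - t) < d \<Longrightarrow> norm (g y - g t - (y - t) * g') \<le> \<epsilon> * norm (y - t)"
    unfolding has_derivative_at_alt using \<open>\<epsilon> > 0\<close> by metis
  show ?thesis
  proof (intro exI[of _ d] conjI allI impI)
    show "0 < d" by (rule d(1))
  next
    fix u v assume uv: "u \<le> t" "t \<le> v" "t - u < d" "v - t < d"
    have 1: "\<bar>g v - g t - (v - t) * g'\<bar> \<le> \<epsilon> * \<bar>v - t\<bar>" using d(2)[of v] uv by auto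
    have 2: "\<bar>g u - g t - (u - t) * g'\<bar> \<le> \<epsilon> * \<bar>u - t\<bar>" using d(2)[of u] uv by auto
    have "(v - t) * g' \<le> 0" using uv assms(2) by (simp add: mult_nonneg_nonpos)
    moreover have "(u - t) * g' \<ge> 0" using uv assms(2) by (simp add: mult_nonpos_nonpos)
    ultimately have "(u - t) * g' \<ge> 0" "(v - t) * g' \<le> 0" by auto
    have a1: "g v - g t \<le> (v-t)*g' + \<epsilon>*(v-t)" using 1 uv by (simp add: abs_le_iff)
    have a2: "g t - g u \<le> -((u-t)*g') + \<epsilon>*(t-u)" using 2 uv by (auto simp: abs_le_iff)
    have a3: "\<epsilon>*(v-u) = \<epsilon>*(v-t) + \<epsilon>*(t-u)" by (simp add: algebra_simps)
    show "g v - g u \<le> \<epsilon> * (v - u)" using a1 a2 a3 \<open>(u - t) * g' \<ge> 0\<close> \<open>(v - t) * g' \<le> 0\<close> by linarith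
  qed
qed

lemma ac_mono:
  fixes g :: "real \<Rightarrow> real" and a b :: real and E :: "real set"
  assumes ab: "a \<le> b" and negE: "negligible E"
   and ac: "\<And>\<epsilon>. \<epsilon>>0 \<Longrightarrow> \<exists>\<delta>>0. \<forall>(m::nat) (\<alpha>::nat\<Rightarrow>real) \<beta>.
        (\<forall>k<m. a \<le> \<alpha> k \<and> \<alpha> k \<le> \<beta> k \<and> \<beta> k \<le> b) \<longrightarrow>
        (\<forall>j<m. \<forall>k<m. j \<noteq> k \<longrightarrow> \<beta> j \<le> \<alpha> k \<or> \<beta> k \<le> \<alpha> j) \<longrightarrow>
        (\<Sum>k<m. \<beta> k - \<alpha> k) < \<delta> \<longrightarrow> (\<Sum>k<m. g (\<beta> k) - g (\<alpha> k)) < \<epsilon>"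
   and der: "\<And>t. t \<in> {a..b} - E \<Longrightarrow> \<exists>g'. (g has_real_derivative g') (at t) \<and> g' \<le> 0"
  shows "g b \<le> g a"
proof (rule field_le_epsilon)
  fix e :: real assume "e > 0"
  define \<epsilon> where "\<epsilon> = e / (b - a + 1)"
  have "\<epsilon> > 0" using \<open>e>0\<close> ab by (simp add: \<epsilon>_def)
  have e_eq: "\<epsilon> * (b - a) + \<epsilon> = e"
  proof -
    have "\<epsilon> * (b - a) + \<epsilon> = \<epsilon> * (b - a + 1)" by (simp add: algebra_simps)
    also have "\<dots> = e" using ab by (simp add: \<epsilon>_def)
    finally show ?thesis .
  qed
  obtain \<delta> where "\<delta> > 0" and \<delta>: "\<And>(m::nat) (\<alpha>::nat\<Rightarrow>real) \<beta>.
        (\<forall>k<m. a \<le> \<alpha> k \<and> \<alpha> k \<le> \<beta> k \<and> \<beta> k \<le> b) \<Longrightarrow>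
        (\<forall>j<m. \<forall>k<m. j \<noteq> k \<longrightarrow> \<beta> j \<le> \<alpha> k \<or> \<beta> k \<le> \<alpha> j) \<Longrightarrow>
        (\<Sum>k<m. \<beta> k - \<alpha> k) < \<delta> \<Longrightarrow> (\<Sum>k<m. g (\<beta> k) - g (\<alpha> k)) < \<epsilon>"
    using ac[OF \<open>\<epsilon> > 0\<close>] by blast
  have "((indicator E :: real \<Rightarrow> real) has_integral 0) {a..b}"
    using negE unfolding negligible_def by (metis box_real(2))
  then obtain \<gamma>1 where g1: "gauge \<gamma>1" and g1D: "\<And>\<D>. \<D> tagged_division_of {a..b} \<Longrightarrow> \<gamma>1 fine \<D> \<Longrightarrow>
       norm ((\<Sum>(x,K)\<in>\<D>. Henstock_Kurzweil_Integration.content K *\<^sub>R (indicator E x :: real)) - 0) < \<delta>"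
    unfolding has_integral_real using \<open>\<delta> > 0\<close> by meson
  have "\<forall>t. \<exists>r>0. t \<in> {a..b} - E \<longrightarrow> (\<forall>u v. u \<le> t \<longrightarrow> t \<le> v \<longrightarrow> t - u < r \<longrightarrow> v - t < r \<longrightarrow> g v - g u \<le> \<epsilon> * (v - u))"
  proof
    fix t
    show "\<exists>r>0. t \<in> {a..b} - E \<longrightarrow> (\<forall>u v. u \<le> t \<longrightarrow> t \<le> v \<longrightarrow> t - u < r \<longrightarrow> v - t < r \<longrightarrow> g v - g u \<le> \<epsilon> * (v - u))"
    proof (cases "t \<in> {a..b} - E")
      case True
      then obtain g' where "(g has_real_derivative g') (at t)" "g' \<le> 0" using der by blast
      from straddle_deriv[OF this \<open>\<epsilon> > 0\<close>] show ?thesis by blast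
    next
      case False
      then show ?thesis by (intro exI[of _ 1] conjI impI) (simp, blast)
    qed
  qed
  then have "\<exists>r. \<forall>t. r t > 0 \<and> (t \<in> {a..b} - E \<longrightarrow> (\<forall>u v. u \<le> t \<longrightarrow> t \<le> v \<longrightarrow> t - u < r t \<longrightarrow> v - t < r t \<longrightarrow> g v - g u \<le> \<epsilon> * (v - u)))"
    by (rule choice)
  then obtain r where r0: "\<forall>t. r t > 0 \<and> (t \<in> {a..b} - E \<longrightarrow> (\<forall>u v. u \<le> t \<longrightarrow> t \<le> v \<longrightarrow> t - u < r t \<longrightarrow> v - t < r t \<longrightarrow> g v - g u \<le> \<epsilon> * (v - u)))"
    by blast
  have r: "\<And>t. r t > 0" using r0 by simp
  have rD: "g v - g u \<le> \<epsilon> * (v - u)" if "t \<in> {a..b} - E" "u \<le> t" "t \<le> v" "t - u < r t" "v - t < r t" for t u v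
  proof -
    have H: "\<forall>u v. u \<le> t \<longrightarrow> t \<le> v \<longrightarrow> t - u < r t \<longrightarrow> v - t < r t \<longrightarrow> g v - g u \<le> \<epsilon> * (v - u)"
      using mp[OF conjunct2[OF spec[OF r0, of t]] that(1)] .
    show ?thesis using H[rule_format, OF that(2-5)] .
  qed
  have gg: "gauge (\<lambda>t. \<gamma>1 t \<inter> ball t (r t))"
    using g1 gauge_ball_dependent[of r] r by (simp add: gauge_Int)
  obtain p where p: "p tagged_division_of {a..b}" and pf: "(\<lambda>t. \<gamma>1 t \<inter> ball t (r t)) fine p"
    using fine_division_exists[OF gg, of a b] by (metis box_real(2))
  have pf1: "\<gamma>1 fine p" and pf2: "(\<lambda>t. ball t (r t)) fine p" using pf[unfolded fine_Int] by auto
  have finp: "finite p" using p by blast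
  have Kform: "\<exists>c d. K = {c..d} \<and> c \<le> t \<and> t \<le> d \<and> a \<le> c \<and> d \<le> b" if tKp: "(t,K) \<in> p" for t K
  proof -
    obtain c d where "K = cbox c d" using tagged_division_ofD(4)[OF p tKp] by blast
    then have K: "K = {c..d}" by simp
    have tK: "t \<in> K" using tagged_division_ofD(2)[OF p tKp] .
    have Kab: "K \<subseteq> {a..b}" using tagged_division_ofD(3)[OF p tKp] .
    have "c \<le> t" "t \<le> d" using tK K by auto
    moreover have "a \<le> c" "d \<le> b" using Kab K calculation by auto
    ultimately show ?thesis using K by blast
  qed
  have tel: "g b - g a = (\<Sum>(t,K)\<in>p. g (Sup K) - g (Inf K))"
    using additive_tagged_division_1[OF ab p, of g] by simp
  define P1 where "P1 = {(t,K)\<in>p. t \<notin> E}"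
  define P2 where "P2 = {(t,K)\<in>p. t \<in> E \<and> Henstock_Kurzweil_Integration.content K > 0}"
  define P3 where "P3 = {(t,K)\<in>p. t \<in> E \<and> Henstock_Kurzweil_Integration.content K \<le> 0}"
  have subP: "P1 \<subseteq> p" "P2 \<subseteq> p" "P3 \<subseteq> p" by (auto simp: P1_def P2_def P3_def)
  have finP: "finite P1" "finite P2" "finite P3" using finite_subset[OF _ finp] subP by blast+
  have pU: "p = P1 \<union> (P2 \<union> P3)" by (auto simp: P1_def P2_def P3_def)
  have dis: "P1 \<inter> (P2 \<union> P3) = {}" "P2 \<inter> P3 = {}" by (auto simp: P1_def P2_def P3_def)
  let ?f = "\<lambda>(t,K). g (Sup K) - g (Inf K)"
  have sum_split: "(\<Sum>x\<in>p. ?f x) = (\<Sum>x\<in>P1. ?f x) + (\<Sum>x\<in>P2. ?f x) + (\<Sum>x\<in>P3. ?f x)"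
    using finP dis by (subst pU) (simp add: sum.union_disjoint)
  have s3: "(\<Sum>x\<in>P3. ?f x) = 0"
  proof (rule sum.neutral, clarify)
    fix t K assume "(t,K) \<in> P3"
    then have tKp: "(t,K) \<in> p" and c0: "Henstock_Kurzweil_Integration.content K \<le> 0" by (auto simp: P3_def)
    obtain c d where "K = {c..d}" "c \<le> t" "t \<le> d" using Kform[OF tKp] by blast
    with c0 have "K = {c..d}" "c \<le> d" "Henstock_Kurzweil_Integration.content K \<le> 0" by auto
    then show "g (Sup K) - g (Inf K) = 0" by (simp add: content_real)
  qed
  have s1: "(\<Sum>x\<in>P1. ?f x) \<le> \<epsilon> * (b - a)"
  proof -
    have "(\<Sum>x\<in>P1. ?f x) \<le> (\<Sum>(t,K)\<in>P1. \<epsilon> * Henstock_Kurzweil_Integration.content K)"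
    proof (rule sum_mono, clarify)
      fix t K assume tK: "(t,K) \<in> P1"
      then have tKp: "(t,K) \<in> p" and "t \<notin> E" by (auto simp: P1_def)
      obtain c d where cd: "K = {c..d}" "c \<le> t" "t \<le> d" "a \<le> c" "d \<le> b" using Kform[OF tKp] by blast
      have "K \<subseteq> ball t (r t)" using pf2 tKp by (auto simp: fine_def)
      moreover have "c \<in> K" "d \<in> K" using cd by auto
      ultimately have "c \<in> ball t (r t)" "d \<in> ball t (r t)" by blast+
      then have "t - c < r t" "d - t < r t" by (auto simp: dist_real_def)
      then have "g d - g c \<le> \<epsilon> * (d - c)" using rD[of t c d] cd \<open>t \<notin> E\<close> by auto
      then show "g (Sup K) - g (Inf K) \<le> \<epsilon> * Henstock_Kurzweil_Integration.content K" using cd by (simp add: content_real)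
    qed
    also have "\<dots> = \<epsilon> * (\<Sum>(t,K)\<in>P1. Henstock_Kurzweil_Integration.content K)" by (simp add: sum_distrib_left case_prod_unfold)
    also have "(\<Sum>(t,K)\<in>P1. Henstock_Kurzweil_Integration.content K) \<le> (\<Sum>(t,K)\<in>p. Henstock_Kurzweil_Integration.content K)"
      by (rule sum_mono2[OF finp]) (auto simp: P1_def)
    also have "(\<Sum>(t,K)\<in>p. Henstock_Kurzweil_Integration.content K) = b - a"
      using additive_content_tagged_division[of p a b] p ab by (simp add: content_real)
    finally show ?thesis using \<open>\<epsilon> > 0\<close> by (simp add: mult_left_mono)
  qed
  have s2: "(\<Sum>x\<in>P2. ?f x) < \<epsilon>"
  proof -
    obtain h where h: "bij_betw h {0..<card P2} P2" using ex_bij_betw_nat_finite[OF finP(2)] by blast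
    define m where "m = card P2"
    define \<alpha> where "\<alpha> k = Inf (snd (h k))" for k
    define \<beta> where "\<beta> k = Sup (snd (h k))" for k
    have hk: "h k \<in> P2" if "k < m" for k using h that unfolding m_def bij_betw_def by auto
    have cdk: "\<exists>c d. snd (h k) = {c..d} \<and> c < d \<and> a \<le> c \<and> d \<le> b \<and> \<alpha> k = c \<and> \<beta> k = d" if "k < m" for k
    proof -
      obtain t K where tK: "h k = (t,K)" by (metis surj_pair)
      with hk[OF that] have "(t,K) \<in> p" "Henstock_Kurzweil_Integration.content K > 0" by (auto simp: P2_def)
      then obtain c d where "K = {c..d}" "c \<le> t" "t \<le> d" "a \<le> c" "d \<le> b" using Kform by blast
      moreover have "c < d" using \<open>Henstock_Kurzweil_Integration.content K > 0\<close> calculation by (simp add: content_real)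
      ultimately show ?thesis using tK by (auto simp: \<alpha>_def \<beta>_def)
    qed
    have c1: "\<forall>k<m. a \<le> \<alpha> k \<and> \<alpha> k \<le> \<beta> k \<and> \<beta> k \<le> b"
    proof (intro allI impI)
      fix k assume "k < m"
      then obtain c d where "c < d" "a \<le> c" "d \<le> b" "\<alpha> k = c" "\<beta> k = d" using cdk by blast
      then show "a \<le> \<alpha> k \<and> \<alpha> k \<le> \<beta> k \<and> \<beta> k \<le> b" by simp
    qed
    have c2: "\<forall>j<m. \<forall>k<m. j \<noteq> k \<longrightarrow> \<beta> j \<le> \<alpha> k \<or> \<beta> k \<le> \<alpha> j"
    proof (intro allI impI)
      fix j k assume jk: "j < m" "k < m" "j \<noteq> k"
      have "h j \<noteq> h k" using h jk unfolding bij_betw_def inj_on_def m_def by auto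
      moreover have "h j \<in> p" "h k \<in> p" using hk jk subP(2) by blast+
      ultimately have "interior (snd (h j)) \<inter> interior (snd (h k)) = {}"
        using p by (metis prod.collapse tagged_division_ofD(5))
      moreover obtain c d where cd: "snd (h j) = {c..d}" "c < d" "\<alpha> j = c" "\<beta> j = d" using cdk jk by blast
      moreover obtain c' d' where cd': "snd (h k) = {c'..d'}" "c' < d'" "\<alpha> k = c'" "\<beta> k = d'" using cdk jk by blast
      ultimately have dis: "{c<..<d} \<inter> {c'<..<d'} = {}" by simp
      show "\<beta> j \<le> \<alpha> k \<or> \<beta> k \<le> \<alpha> j"
      proof (rule ccontr)
        assume "\<not> ?thesis"
        then have "d > c'" "d' > c" using cd cd' by auto
        then have "(max c c' + min d d')/2 \<in> {c<..<d} \<inter> {c'<..<d'}" using cd cd' by auto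
        then show False using dis by blast
      qed
    qed
    have sumeq: "(\<Sum>k<m. F (h k)) = (\<Sum>x\<in>P2. F x)" for F :: "real \<times> real set \<Rightarrow> real"
      using sum.reindex_bij_betw[OF h, of F] by (simp add: m_def lessThan_atLeast0)
    have "(\<Sum>k<m. \<beta> k - \<alpha> k) = (\<Sum>(t,K)\<in>P2. Henstock_Kurzweil_Integration.content K)"
    proof -
      have "(\<Sum>k<m. \<beta> k - \<alpha> k) = (\<Sum>k<m. (\<lambda>(t,K). Henstock_Kurzweil_Integration.content K) (h k))"
      proof (rule sum.cong)
        fix k assume "k \<in> {..<m}"
        then obtain c d where "snd (h k) = {c..d}" "c < d" "\<alpha> k = c" "\<beta> k = d" using cdk by blast
        then show "\<beta> k - \<alpha> k = (\<lambda>(t,K). Henstock_Kurzweil_Integration.content K) (h k)"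
          by (simp add: content_real case_prod_unfold)
      qed simp
      then show ?thesis using sumeq by simp
    qed
    also have "\<dots> \<le> (\<Sum>(t,K)\<in>p. Henstock_Kurzweil_Integration.content K *\<^sub>R indicator E t)"
    proof -
      have "(\<Sum>(t,K)\<in>P2. Henstock_Kurzweil_Integration.content K) = (\<Sum>(t,K)\<in>P2. Henstock_Kurzweil_Integration.content K *\<^sub>R indicator E t)"
        by (rule sum.cong) (auto simp: P2_def)
      also have "\<dots> \<le> (\<Sum>(t,K)\<in>p. Henstock_Kurzweil_Integration.content K *\<^sub>R indicator E t)"
        by (rule sum_mono2[OF finp]) (auto simp: P2_def indicator_def)
      finally show ?thesis .
    qed
    also have "\<dots> < \<delta>" using g1D[OF p pf1] by simp
    finally have "(\<Sum>k<m. g (\<beta> k) - g (\<alpha> k)) < \<epsilon>" using \<delta> c1 c2 by blast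
    moreover have "(\<Sum>k<m. g (\<beta> k) - g (\<alpha> k)) = (\<Sum>x\<in>P2. ?f x)"
      using sumeq[of ?f] by (simp add: \<alpha>_def \<beta>_def case_prod_unfold)
    ultimately show ?thesis by simp
  qed
  have "g b - g a < \<epsilon> * (b - a) + \<epsilon>" using tel sum_split s1 s2 s3 by simp
  then show "g b \<le> g a + e" using e_eq by simp
qed

lemma diag_mv: assumes "pos_diag M" shows "(M *v x)$i = M$i$i * x$i"
proof -
  have "(\<Sum>j\<in>UNIV. M$i$j * x$j) = (\<Sum>j\<in>UNIV. if j = i then M$i$i * x$i else 0)"
    by (rule sum.cong) (use assms in \<open>auto simp: pos_diag_def\<close>)
  then show ?thesis by (simp add: matrix_vector_mult_def)
qed

lemma pos_diag_pos: "pos_diag M \<Longrightarrow> M$i$i > 0" by (simp add: pos_diag_def)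

definition Vf :: "real^'n^'n \<Rightarrow> real^'n^'n \<Rightarrow> real^'n^'n \<Rightarrow> real^'n \<Rightarrow> real^'n \<Rightarrow> real" where
  "Vf Lam D A u x = (\<Sum>i\<in>UNIV. Lam$i$i * (max ((A *v x + u)$i) 0 - (A *v x + u)$i * (D *v x)$i))"

lemma V_inf_eq:
  fixes x :: "real^'n"
  assumes L: "pos_diag Lam"
  shows "V_inf D A u Lam x = Vf Lam D A u x"
proof -
  let ?z = "A *v x + u"
  define Z where "Z = {\<zeta>::real^'n. \<forall>i. \<zeta>$i \<in> {0,1}}"
  have "Z \<subseteq> vec_lambda ` (Pi\<^sub>E UNIV (\<lambda>_. {0::real,1}))"
  proof
    fix \<zeta> assume "\<zeta> \<in> Z"
    then have "vec_nth \<zeta> \<in> Pi\<^sub>E UNIV (\<lambda>_. {0::real,1})" by (auto simp: Z_def PiE_UNIV_domain)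
    then show "\<zeta> \<in> vec_lambda ` (Pi\<^sub>E UNIV (\<lambda>_. {0::real,1}))" by (metis image_eqI vec_nth_inverse)
  qed
  moreover have "finite (Pi\<^sub>E (UNIV::'n set) (\<lambda>_. {0::real,1}))" by (rule finite_PiE) auto
  ultimately have finZ: "finite Z" using finite_subset by blast
  have val: "?z \<bullet> (Lam *v (\<zeta> - D *v x)) = (\<Sum>i\<in>UNIV. Lam$i$i * (?z$i * \<zeta>$i - ?z$i * (D *v x)$i))" for \<zeta>
    unfolding inner_vec_def by (rule sum.cong) (simp_all add: diag_mv[OF L] algebra_simps)
  define \<zeta>0 where "\<zeta>0 = (\<chi> i. if ?z$i > 0 then 1 else (0::real))"
  have "Max ((\<lambda>\<zeta>. ?z \<bullet> (Lam *v (\<zeta> - D *v x))) ` Z) = Vf Lam D A u x"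
  proof (rule Max_eqI)
    show "finite ((\<lambda>\<zeta>. ?z \<bullet> (Lam *v (\<zeta> - D *v x))) ` Z)" using finZ by simp
  next
    fix y assume "y \<in> (\<lambda>\<zeta>. ?z \<bullet> (Lam *v (\<zeta> - D *v x))) ` Z"
    then obtain \<zeta> where \<zeta>: "\<zeta> \<in> Z" and y: "y = ?z \<bullet> (Lam *v (\<zeta> - D *v x))" by blast
    have "y = (\<Sum>i\<in>UNIV. Lam$i$i * (?z$i * \<zeta>$i - ?z$i * (D *v x)$i))" using y val by simp
    also have "\<dots> \<le> Vf Lam D A u x" unfolding Vf_def
    proof (rule sum_mono)
      fix i
      have "\<zeta>$i = 0 \<or> \<zeta>$i = 1" using \<zeta> by (auto simp: Z_def)
      then have "?z$i * \<zeta>$i \<le> max (?z$i) 0" by (elim disjE) simp_all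
      then show "Lam$i$i * (?z$i * \<zeta>$i - ?z$i * (D *v x)$i) \<le> Lam$i$i * (max (?z$i) 0 - ?z$i * (D *v x)$i)"
        using pos_diag_pos[OF L, of i] by (intro mult_left_mono) auto
    qed
    finally show "y \<le> Vf Lam D A u x" .
  next
    have z0: "\<zeta>0 \<in> Z" unfolding Z_def \<zeta>0_def by simp
    have e1: "?z \<bullet> (Lam *v (\<zeta>0 - D *v x)) = Vf Lam D A u x"
      unfolding val Vf_def by (rule sum.cong) (simp_all add: \<zeta>0_def max_def)
    show "Vf Lam D A u x \<in> (\<lambda>\<zeta>. ?z \<bullet> (Lam *v (\<zeta> - D *v x))) ` Z"
      using image_eqI[where f="\<lambda>\<zeta>. ?z \<bullet> (Lam *v (\<zeta> - D *v x))", OF e1[symmetric] z0] .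
  qed
  then show ?thesis by (simp add: V_inf_def Z_def)
qed

lemma quad:
  assumes L: "pos_diag Lam"
  shows "v \<bullet> ((transpose A ** Lam + Lam ** A) *v v) = 2 * (\<Sum>i\<in>UNIV. Lam$i$i * v$i * (A *v v)$i)"
proof -
  have "(transpose A ** Lam + Lam ** A) *v v = transpose A *v (Lam *v v) + Lam *v (A *v v)"
    by (simp add: matrix_vector_mult_add_rdistrib matrix_vector_mul_assoc)
  then have "v \<bullet> ((transpose A ** Lam + Lam ** A) *v v) = v \<bullet> ((Lam *v v) v* A) + v \<bullet> (Lam *v (A *v v))"
    by (simp add: inner_add_right)
  also have "v \<bullet> ((Lam *v v) v* A) = (Lam *v v) \<bullet> (A *v v)"
    by (metis dot_lmul_matrix inner_commute)
  also have "(Lam *v v) \<bullet> (A *v v) = (\<Sum>i\<in>UNIV. Lam$i$i * v$i * (A *v v)$i)"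
    by (simp add: inner_vec_def diag_mv[OF L])
  also have "v \<bullet> (Lam *v (A *v v)) = (\<Sum>i\<in>UNIV. Lam$i$i * v$i * (A *v v)$i)"
    by (simp add: inner_vec_def diag_mv[OF L] algebra_simps)
  finally show ?thesis by simp
qed

lemma lds_neg:
  assumes "lds_cert A Lam" "v \<noteq> 0"
  shows "(\<Sum>i\<in>UNIV. Lam$i$i * v$i * (A *v v)$i) < 0"
  using assms quad[of Lam v A] by (auto simp: lds_cert_def neg_def_def)

lemma lds_nonpos:
  assumes "lds_cert A Lam"
  shows "(\<Sum>i\<in>UNIV. Lam$i$i * v$i * (A *v v)$i) \<le> 0"
  using lds_neg[OF assms, of v] by (cases "v = 0") auto

lemma Xset_iff: "x \<in> Xset D \<longleftrightarrow> (\<forall>i. 0 \<le> (D *v x)$i \<and> (D *v x)$i \<le> 1)"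
  by (auto simp: Xset_def)

lemma hsel_iff: "y \<in> hsel z \<longleftrightarrow> (z < 0 \<and> y = 0) \<or> (z = 0 \<and> 0 \<le> y \<and> y \<le> 1) \<or> (z > 0 \<and> y = 1)"
  by (auto simp: hsel_def)

lemma equil_iff: "is_equilibrium D A u x \<longleftrightarrow> x \<in> Xset D \<and> (\<forall>i. (D *v x)$i \<in> hsel ((A *v x + u)$i))"
proof -
  have "0 \<in> Finc D A u x \<longleftrightarrow> D *v x \<in> Hsel (A *v x + u)"
  proof
    assume "0 \<in> Finc D A u x"
    then obtain h where "0 = - (D *v x) + h" "h \<in> Hsel (A *v x + u)" by (auto simp: Finc_def)
    then show "D *v x \<in> Hsel (A *v x + u)" by (metis add.commute add_uminus_conv_diff eq_iff_diff_eq_0)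
  next
    assume "D *v x \<in> Hsel (A *v x + u)"
    then show "0 \<in> Finc D A u x" unfolding Finc_def by (intro CollectI exI[of _ "D *v x"]) simp
  qed
  then show ?thesis by (simp add: is_equilibrium_def Hsel_def)
qed

lemma term_nonneg: assumes "0 \<le> y" "y \<le> (1::real)" shows "0 \<le> max z 0 - z * y"
proof (cases "z \<ge> 0")
  case True
  then have "max z 0 - z * y = z * (1 - y)" by (simp add: algebra_simps)
  then show ?thesis using True assms by simp
next
  case False
  then have "max z 0 - z * y = (- z) * y" by simp
  then show ?thesis using False assms by (simp add: mult_nonpos_nonneg)
qed
lemma term_zero: assumes "0 \<le> y" "y \<le> (1::real)" shows "(max z 0 - z * y = 0) \<longleftrightarrow> y \<in> hsel z"
proof -
  consider "z > 0" | "z = 0" | "z < 0" by linarith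
  then show ?thesis
  proof cases
    case 1
    then have "max z 0 - z * y = z * (1 - y)" by (simp add: algebra_simps)
    then show ?thesis using 1 by (simp add: hsel_def)
  next
    case 2
    then show ?thesis using assms by (simp add: hsel_def)
  next
    case 3
    then have "max z 0 - z * y = (- z) * y" by simp
    then show ?thesis using 3 by (simp add: hsel_def)
  qed
qed
lemma Vf_nonneg:
  assumes "pos_diag Lam" "x \<in> Xset D"
  shows "0 \<le> Vf Lam D A u x"
  unfolding Vf_def
proof (rule sum_nonneg)
  fix i
  have "0 \<le> (D *v x)$i" "(D *v x)$i \<le> 1" using assms(2) by (auto simp: Xset_iff)
  then show "0 \<le> Lam$i$i * (max ((A *v x + u)$i) 0 - (A *v x + u)$i * (D *v x)$i)"
    using pos_diag_pos[OF assms(1), of i] by (intro mult_nonneg_nonneg term_nonneg) auto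
qed

lemma Vf_zero_iff:
  assumes L: "pos_diag Lam" and x: "x \<in> Xset D"
  shows "Vf Lam D A u x = 0 \<longleftrightarrow> is_equilibrium D A u x"
proof -
  have nn: "\<forall>i\<in>UNIV. 0 \<le> Lam$i$i * (max ((A *v x + u)$i) 0 - (A *v x + u)$i * (D *v x)$i)"
  proof
    fix i
    have "0 \<le> (D *v x)$i" "(D *v x)$i \<le> 1" using x by (auto simp: Xset_iff)
    then show "0 \<le> Lam$i$i * (max ((A *v x + u)$i) 0 - (A *v x + u)$i * (D *v x)$i)"
      using pos_diag_pos[OF L, of i] by (intro mult_nonneg_nonneg term_nonneg) auto
  qed
  have "Vf Lam D A u x = 0 \<longleftrightarrow> (\<forall>i. Lam$i$i * (max ((A *v x + u)$i) 0 - (A *v x + u)$i * (D *v x)$i) = 0)"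
    unfolding Vf_def using sum_nonneg_eq_0_iff[of UNIV, OF finite, of "\<lambda>i. Lam$i$i * (max ((A *v x + u)$i) 0 - (A *v x + u)$i * (D *v x)$i)"] nn by simp
  also have "\<dots> \<longleftrightarrow> (\<forall>i. (D *v x)$i \<in> hsel ((A *v x + u)$i))"
  proof -
    have "(Lam$i$i * (max ((A *v x + u)$i) 0 - (A *v x + u)$i * (D *v x)$i) = 0) \<longleftrightarrow> (D *v x)$i \<in> hsel ((A *v x + u)$i)" for i
    proof -
      have "0 \<le> (D *v x)$i" "(D *v x)$i \<le> 1" using x by (auto simp: Xset_iff)
      note tz = term_zero[OF this, of "(A *v x + u)$i"]
      have "Lam$i$i \<noteq> 0" using pos_diag_pos[OF L, of i] by simp
      then show ?thesis using tz by simp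
    qed
    then show ?thesis by simp
  qed
  finally show ?thesis using x equil_iff by blast
qed

lemma hsel_bounds: "y \<in> hsel z \<Longrightarrow> 0 \<le> y \<and> y \<le> 1"
  by (simp add: hsel_def split: if_splits)
lemma hsel_mono1: assumes "y \<in> hsel z" "y' \<in> hsel z'" "z' < z" shows "y' \<le> y"
proof (cases "z' < 0")
  case True
  then have "y' = 0" using assms(2) by (simp add: hsel_def)
  then show ?thesis using hsel_bounds[OF assms(1)] by simp
next
  case False
  then have "z > 0" using assms(3) by simp
  then have "y = 1" using assms(1) by (simp add: hsel_def)
  then show ?thesis using hsel_bounds[OF assms(2)] by simp
qed
lemma hsel_mono: assumes "y \<in> hsel z" "y' \<in> hsel z'" shows "0 \<le> (z - z') * (y - y')"
proof -
  consider "z' < z" | "z = z'" | "z < z'" by linarith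
  then show ?thesis
  proof cases
    case 1 then show ?thesis using hsel_mono1[OF assms 1] by simp
  next
    case 2 then show ?thesis by simp
  next
    case 3 then show ?thesis using hsel_mono1[OF assms(2,1) 3] by (simp add: mult_nonpos_nonpos)
  qed
qed

lemma equil_unique:
  assumes D: "pos_diag D" and C: "lds_cert A Lam"
    and e1: "is_equilibrium D A u x1" and e2: "is_equilibrium D A u x2"
  shows "x1 = x2"
proof (rule ccontr)
  assume ne: "x1 \<noteq> x2"
  have L: "pos_diag Lam" using C by (simp add: lds_cert_def)
  let ?v = "x1 - x2"
  have "?v \<noteq> 0" using ne by simp
  then have neg: "(\<Sum>i\<in>UNIV. Lam$i$i * ?v$i * (A *v ?v)$i) < 0" using lds_neg[OF C] by blast
  have "0 \<le> Lam$i$i * ?v$i * (A *v ?v)$i" for i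
  proof -
    have h1: "(D *v x1)$i \<in> hsel ((A *v x1 + u)$i)" using e1 equil_iff by blast
    have h2: "(D *v x2)$i \<in> hsel ((A *v x2 + u)$i)" using e2 equil_iff by blast
    have "0 \<le> ((A *v x1 + u)$i - (A *v x2 + u)$i) * ((D *v x1)$i - (D *v x2)$i)"
      using hsel_mono[OF h1 h2] .
    also have "\<dots> = D$i$i * ((A *v ?v)$i * ?v$i)"
      by (simp add: diag_mv[OF D] matrix_vector_mult_diff_distrib algebra_simps)
    finally have "0 \<le> (A *v ?v)$i * ?v$i"
      using pos_diag_pos[OF D, of i] by (simp add: zero_le_mult_iff)
    then have "0 \<le> Lam$i$i * ((A *v ?v)$i * ?v$i)" using pos_diag_pos[OF L, of i] by simp
    then show ?thesis by (simp add: algebra_simps)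
  qed
  then have "0 \<le> (\<Sum>i\<in>UNIV. Lam$i$i * ?v$i * (A *v ?v)$i)" by (intro sum_nonneg) auto
  with neg show False by simp
qed

lemma clamp_hsel:
  fixes y z :: real
  assumes "y = max 0 (min 1 (y + z))"
  shows "y \<in> hsel z \<and> 0 \<le> y \<and> y \<le> 1"
proof -
  have "0 \<le> max 0 (min 1 (y + z))" "max 0 (min 1 (y + z)) \<le> (1::real)" by simp_all
  then have b: "0 \<le> y" "y \<le> 1" using assms by simp_all
  consider "z > 0" | "z = 0" | "z < 0" by linarith
  then have "y \<in> hsel z"
  proof cases
    case 1
    then have "y = 1" using assms b by (cases "y + z \<le> 1") (simp_all add: min_def max_def)
    then show ?thesis using 1 by (simp add: hsel_def)
  next
    case 2 then show ?thesis using b by (simp add: hsel_def)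
  next
    case 3
    then have "y = 0" using assms b by (cases "y + z \<ge> 0") (simp_all add: min_def max_def)
    then show ?thesis using 3 by (simp add: hsel_def)
  qed
  then show ?thesis using b by simp
qed

lemma continuous_on_mv: "continuous_on S (\<lambda>x::real^'n. ((M::real^'n^'m) *v x) $ i)"
proof -
  have "bounded_linear (\<lambda>x. (M *v x) $ i)"
    by (rule bounded_linear_compose[OF bounded_linear_vec_nth matrix_vector_mul_bounded_linear])
  then show ?thesis by (rule linear_continuous_on)
qed

lemma equil_exists:
  fixes D A :: "real^'n^'n" and u :: "real^'n"
  assumes D: "pos_diag D"
  shows "\<exists>x. is_equilibrium D A u x"
proof -
  define bb :: "real^'n" where "bb = (\<chi> i. 1 / D$i$i)"
  define S where "S = cbox (0::real^'n) bb"
  define f where "f x = (\<chi> i. max 0 (min 1 ((D *v x)$i + (A *v x + u)$i)) / D$i$i)" for x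
  have S_iff: "x \<in> S \<longleftrightarrow> (\<forall>i. 0 \<le> x$i \<and> x$i \<le> 1 / D$i$i)" for x
    by (simp add: S_def mem_box_cart bb_def)
  have c1: "compact S" "convex S" by (simp_all add: S_def compact_cbox convex_box)
  have c2: "S \<noteq> {}" using S_iff[of 0] pos_diag_pos[OF D] by (auto simp: less_imp_le)
  have c3: "continuous_on S f"
    unfolding f_def by (intro continuous_intros continuous_on_mv) (simp add: pos_diag_pos[OF D, THEN less_imp_neq, symmetric])
  have c4: "f \<in> S \<rightarrow> S"
  proof
    fix x assume "x \<in> S"
    show "f x \<in> S" unfolding S_iff
    proof
      fix i
      have d: "D$i$i > 0" using pos_diag_pos[OF D] .
      let ?c = "max 0 (min 1 ((D *v x)$i + (A *v x + u)$i))"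
      have "0 \<le> ?c" "?c \<le> 1" by auto
      have fx: "f x $ i = ?c / D$i$i" by (simp add: f_def)
      have "0 \<le> ?c / D$i$i" using d by simp
      moreover have "?c / D$i$i \<le> 1 / D$i$i" using d \<open>?c \<le> 1\<close> by (rule divide_right_mono[OF _ less_imp_le, rotated])
      ultimately show "0 \<le> f x $ i \<and> f x $ i \<le> 1 / D$i$i" using fx by simp
    qed
  qed
  obtain x where "x \<in> S" "f x = x" using brouwer[OF c1 c2 c3 c4] by blast
  have "(D *v x)$i \<in> hsel ((A *v x + u)$i) \<and> 0 \<le> (D *v x)$i \<and> (D *v x)$i \<le> 1" for i
  proof -
    have d: "D$i$i > 0" using pos_diag_pos[OF D] .
    have "x$i = f x $ i" using \<open>f x = x\<close> by simp
    also have "\<dots> = max 0 (min 1 ((D *v x)$i + (A *v x + u)$i)) / D$i$i" by (simp add: f_def)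
    finally have xi: "x$i = max 0 (min 1 ((D *v x)$i + (A *v x + u)$i)) / D$i$i" .
    have "(D *v x)$i = D$i$i * x$i" by (rule diag_mv[OF D])
    also have "\<dots> = max 0 (min 1 ((D *v x)$i + (A *v x + u)$i))" using d by (subst xi) simp
    finally have "(D *v x)$i = max 0 (min 1 ((D *v x)$i + (A *v x + u)$i))" .
    then show ?thesis by (rule clamp_hsel)
  qed
  then have "is_equilibrium D A u x" by (simp add: equil_iff Xset_iff)
  then show ?thesis by blast
qed

lemma deriv_max0:
  fixes w :: "real \<Rightarrow> real"
  assumes w: "(w has_real_derivative w') (at t)" and z: "w t = 0 \<Longrightarrow> w' = 0"
  shows "((\<lambda>s. max (w s) 0) has_real_derivative (if w t > 0 then w' else 0)) (at t)"
proof -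
  have lim: "(w \<longlongrightarrow> w t) (at t)" using DERIV_isCont[OF w] isCont_def by blast
  consider "w t > 0" | "w t < 0" | "w t = 0" by linarith
  then show ?thesis
  proof cases
    case 1
    have "eventually (\<lambda>s. w s > 0) (at t)" using order_tendstoD(1)[OF lim 1] .
    then have ev: "eventually (\<lambda>s. max (w s) 0 = w s) (nhds t)"
      unfolding eventually_at_filter using 1 by (auto elim!: eventually_mono)
    show ?thesis using w 1 DERIV_cong_ev[OF refl ev refl, of w'] by simp
  next
    case 2
    have "eventually (\<lambda>s. w s < 0) (at t)" using order_tendstoD(2)[OF lim 2] .
    then have ev: "eventually (\<lambda>s. max (w s) 0 = 0) (nhds t)"
      unfolding eventually_at_filter using 2 by (auto elim!: eventually_mono)
    have "((\<lambda>s. 0::real) has_real_derivative 0) (at t)" by simp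
    then show ?thesis using 2 DERIV_cong_ev[OF refl ev refl, of 0] by simp
  next
    case 3
    then have w0: "w' = 0" using z by simp
    have "((\<lambda>h. (w (t + h) - w t) / h) \<longlongrightarrow> 0) (at 0)" using w w0 by (simp add: DERIV_def)
    then have L: "((\<lambda>h. \<bar>(w (t + h) - w t) / h\<bar>) \<longlongrightarrow> 0) (at 0)" by (rule tendsto_rabs_zero)
    have "((\<lambda>h. (max (w (t + h)) 0 - max (w t) 0) / h) \<longlongrightarrow> 0) (at 0)"
    proof (rule Lim_null_comparison[OF _ L])
      show "\<forall>\<^sub>F h in at 0. norm ((max (w (t + h)) 0 - max (w t) 0) / h) \<le> \<bar>(w (t + h) - w t) / h\<bar>"
      proof (rule always_eventually, rule allI)
        fix h
        have "\<bar>max (w (t + h)) 0\<bar> \<le> \<bar>w (t + h)\<bar>" by simp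
        then show "norm ((max (w (t + h)) 0 - max (w t) 0) / h) \<le> \<bar>(w (t + h) - w t) / h\<bar>"
          using 3 by (simp add: divide_right_mono abs_divide)
      qed
    qed
    then show ?thesis using 3 by (simp add: DERIV_def)
  qed
qed

lemma deriv_comp:
  fixes x :: "real \<Rightarrow> real^'n" and M :: "real^'n^'n"
  assumes "(x has_vector_derivative v) (at t)"
  shows "((\<lambda>s. (M *v x s + c)$i) has_real_derivative (M *v v)$i) (at t)"
proof -
  have bl: "bounded_linear (\<lambda>w::real^'n. (M *v w) $ i)"
    by (rule bounded_linear_compose[OF bounded_linear_vec_nth matrix_vector_mul_bounded_linear])
  have "((\<lambda>s. (M *v x s)$i) has_vector_derivative (M *v v)$i) (at t)"
    using bounded_linear.has_vector_derivative[OF bl assms] .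
  then have "((\<lambda>s. (M *v x s)$i) has_real_derivative (M *v v)$i) (at t)"
    by (simp add: has_real_derivative_iff_has_vector_derivative)
  then have "((\<lambda>s. (M *v x s)$i + c$i) has_real_derivative (M *v v)$i + 0) (at t)"
    by (intro DERIV_add DERIV_const)
  then show ?thesis by simp
qed

definition Vd :: "real^'n^'n \<Rightarrow> real^'n^'n \<Rightarrow> real^'n^'n \<Rightarrow> real^'n \<Rightarrow> real^'n \<Rightarrow> real^'n \<Rightarrow> real" where
  "Vd Lam D A u x v = (\<Sum>i\<in>UNIV. Lam$i$i * ((if (A *v x + u)$i > 0 then (A *v v)$i else 0)
       - ((A *v v)$i * (D *v x)$i + (D *v v)$i * (A *v x + u)$i)))"

lemma deriv_Vf:
  fixes x :: "real \<Rightarrow> real^'n"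
  assumes xd: "(x has_vector_derivative v) (at t)"
    and z0: "\<And>i. (A *v x t + u)$i = 0 \<Longrightarrow> (A *v v)$i = 0"
  shows "((\<lambda>s. Vf Lam D A u (x s)) has_real_derivative Vd Lam D A u (x t) v) (at t)"
proof -
  have "((\<lambda>s. Lam$i$i * (max ((A *v x s + u)$i) 0 - (A *v x s + u)$i * (D *v x s + 0)$i)) has_real_derivative
      Lam$i$i * ((if (A *v x t + u)$i > 0 then (A *v v)$i else 0)
       - ((A *v v)$i * (D *v x t + 0)$i + (D *v v)$i * (A *v x t + u)$i))) (at t)" for i
    by (intro DERIV_cmult DERIV_diff DERIV_mult deriv_max0 deriv_comp[OF xd] z0)
  then have "((\<lambda>s. \<Sum>i\<in>UNIV. Lam$i$i * (max ((A *v x s + u)$i) 0 - (A *v x s + u)$i * (D *v x s + 0)$i)) has_real_derivative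
      (\<Sum>i\<in>UNIV. Lam$i$i * ((if (A *v x t + u)$i > 0 then (A *v v)$i else 0)
       - ((A *v v)$i * (D *v x t + 0)$i + (D *v v)$i * (A *v x t + u)$i)))) (at t)"
    by (intro DERIV_sum)
  then show ?thesis by (simp add: Vf_def Vd_def)
qed

lemma Vd_bound:
  fixes x v :: "real^'n"
  assumes D: "pos_diag D" and C: "lds_cert A Lam" and xX: "x \<in> Xset D"
    and vF: "v \<in> Finc D A u x"
    and z0: "\<And>i. (A *v x + u)$i = 0 \<Longrightarrow> (A *v v)$i = 0"
    and dm: "\<And>i. dm \<le> D$i$i"
  shows "Vd Lam D A u x v \<le> - dm * Vf Lam D A u x"
proof -
  have L: "pos_diag Lam" using C by (simp add: lds_cert_def)
  obtain h where vh: "v = - (D *v x) + h" and hH: "h \<in> Hsel (A *v x + u)" using vF by (auto simp: Finc_def)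
  define z where "z i = (A *v x + u)$i" for i
  define y where "y i = (D *v x)$i" for i
  have vi: "v$i = h$i - y i" for i using vh by (simp add: y_def)
  have hi: "h$i \<in> hsel (z i)" for i using hH by (simp add: Hsel_def z_def)
  have yb: "0 \<le> y i" "y i \<le> 1" for i using xX by (auto simp: Xset_iff y_def)
  have m: "(if z i > 0 then (A *v v)$i else 0) = (A *v v)$i * h$i" for i
  proof -
    consider "z i > 0" | "z i < 0" | "z i = 0" by linarith
    then show ?thesis
    proof cases
      case 1 then have "h$i = 1" using hi[of i] by (simp add: hsel_def)
      then show ?thesis using 1 by simp
    next
      case 2 then have "h$i = 0" using hi[of i] by (simp add: hsel_def)
      then show ?thesis using 2 by simp
    next
      case 3 then have "(A *v v)$i = 0" using z0 by (simp add: z_def)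
      then show ?thesis using 3 by simp
    qed
  qed
  have zv: "z i * v$i = max (z i) 0 - z i * y i" for i
  proof -
    consider "z i > 0" | "z i < 0" | "z i = 0" by linarith
    then show ?thesis
    proof cases
      case 1 then have "h$i = 1" using hi[of i] by (simp add: hsel_def)
      then have "v$i = 1 - y i" using vi[of i] by simp
      then show ?thesis using 1 by (simp add: right_diff_distrib max_def)
    next
      case 2 then have "h$i = 0" using hi[of i] by (simp add: hsel_def)
      then have "v$i = - y i" using vi[of i] by simp
      then show ?thesis using 2 by (simp add: max_def)
    next
      case 3 then show ?thesis by simp
    qed
  qed
  have zv0: "0 \<le> z i * v$i" for i using zv[of i] term_nonneg[OF yb(1) yb(2)] by simp
  have "Vd Lam D A u x v = (\<Sum>i\<in>UNIV. Lam$i$i * v$i * (A *v v)$i) - (\<Sum>i\<in>UNIV. Lam$i$i * D$i$i * (z i * v$i))"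
    unfolding Vd_def sum_subtractf[symmetric]
  proof (rule sum.cong[OF refl])
    fix i
    have e1: "(if (A *v x + u)$i > 0 then (A *v v)$i else 0) = (A *v v)$i * h$i" using m[of i] by (simp add: z_def)
    have e2: "(D *v x)$i = y i" "(A *v x + u)$i = z i" by (simp_all add: y_def z_def)
    have e3: "(D *v v)$i = D$i$i * v$i" by (rule diag_mv[OF D])
    show "Lam$i$i * ((if (A *v x + u)$i > 0 then (A *v v)$i else 0)
       - ((A *v v)$i * (D *v x)$i + (D *v v)$i * (A *v x + u)$i)) =
       Lam$i$i * v$i * (A *v v)$i - Lam$i$i * D$i$i * (z i * v$i)"
    proof -
      have hv: "h$i = v$i + y i" using vi[of i] by simp
      show ?thesis unfolding e1 unfolding e2 e3 hv by (simp add: algebra_simps)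
    qed
  qed
  also have "\<dots> \<le> 0 - (\<Sum>i\<in>UNIV. Lam$i$i * dm * (z i * v$i))"
  proof (rule diff_mono)
    show "(\<Sum>i\<in>UNIV. Lam$i$i * v$i * (A *v v)$i) \<le> 0" by (rule lds_nonpos[OF C])
    show "(\<Sum>i\<in>UNIV. Lam$i$i * dm * (z i * v$i)) \<le> (\<Sum>i\<in>UNIV. Lam$i$i * D$i$i * (z i * v$i))"
    proof (rule sum_mono)
      fix i
      have "Lam$i$i * dm \<le> Lam$i$i * D$i$i" using dm[of i] pos_diag_pos[OF L, of i] by simp
      then show "Lam$i$i * dm * (z i * v$i) \<le> Lam$i$i * D$i$i * (z i * v$i)"
        using zv0[of i] by (rule mult_right_mono)
    qed
  qed
  also have "(\<Sum>i\<in>UNIV. Lam$i$i * dm * (z i * v$i)) = dm * Vf Lam D A u x"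
    unfolding Vf_def sum_distrib_left
  proof (rule sum.cong[OF refl])
    fix i
    have "max ((A *v x + u)$i) 0 - (A *v x + u)$i * (D *v x)$i = z i * v$i"
      using zv[of i] unfolding z_def y_def by simp
    then show "Lam$i$i * dm * (z i * v$i) = dm * (Lam$i$i * (max ((A *v x + u)$i) 0 - (A *v x + u)$i * (D *v x)$i))"
      by simp
  qed
  finally show ?thesis by simp
qed

lemma scalar_lip:
  fixes a b c e :: real
  assumes "0 \<le> b" "b \<le> 1"
  shows "(max a 0 - a * b) - (max c 0 - c * e) \<le> 2 * \<bar>a - c\<bar> + \<bar>c\<bar> * \<bar>b - e\<bar>"
proof -
  have 1: "max a 0 - max c 0 \<le> \<bar>a - c\<bar>" by (simp add: max_def abs_if)
  have "\<bar>(a - c) * b\<bar> \<le> \<bar>a - c\<bar>" using assms by (simp add: abs_mult mult_left_le)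
  moreover have "\<bar>c * (b - e)\<bar> = \<bar>c\<bar> * \<bar>b - e\<bar>" by (simp add: abs_mult)
  moreover have "c * e - a * b = - ((a - c) * b) - c * (b - e)" by (simp add: algebra_simps)
  ultimately have "c * e - a * b \<le> \<bar>a - c\<bar> + \<bar>c\<bar> * \<bar>b - e\<bar>" by linarith
  then show ?thesis using 1 by linarith
qed

lemma X_bound:
  assumes D: "pos_diag D"
  shows "\<exists>R. \<forall>x\<in>Xset D. norm x \<le> R"
proof (intro exI ballI)
  fix x assume x: "x \<in> Xset D"
  have "\<bar>x$i\<bar> \<le> 1 / D$i$i" for i
  proof -
    have d: "D$i$i > 0" using pos_diag_pos[OF D] .
    have "0 \<le> D$i$i * x$i" "D$i$i * x$i \<le> 1" using x by (auto simp: Xset_iff diag_mv[OF D])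
    then have "0 \<le> x$i" "x$i \<le> 1 / D$i$i" using d by (auto simp: zero_le_mult_iff field_simps)
    then show ?thesis by simp
  qed
  then have "(\<Sum>i\<in>UNIV. \<bar>x$i\<bar>) \<le> (\<Sum>i\<in>UNIV. 1 / D$i$i)" by (intro sum_mono)
  then show "norm x \<le> (\<Sum>i\<in>UNIV. 1 / D$i$i)" using norm_le_l1_cart[of x] by linarith
qed

lemma mv_bound: "\<exists>K>0. \<forall>w. norm ((M::real^'n^'n) *v w) \<le> K * norm w"
proof -
  obtain K where "K > 0" "\<And>w. norm (M *v w) \<le> norm w * K"
    using bounded_linear.pos_bounded[OF matrix_vector_mul_bounded_linear[of M]] by blast
  then show ?thesis by (metis mult.commute)
qed

lemma Vf_lip:
  fixes D A Lam :: "real^'n^'n" and u :: "real^'n"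
  assumes D: "pos_diag D" and L: "pos_diag Lam"
  shows "\<exists>K\<ge>0. \<forall>x\<in>Xset D. \<forall>x'\<in>Xset D. Vf Lam D A u x' - Vf Lam D A u x \<le> K * norm (x' - x)"
proof -
  obtain R where R: "\<And>x. x \<in> Xset D \<Longrightarrow> norm x \<le> R" using X_bound[OF D] by blast
  obtain KA where KA: "KA > 0" "\<And>w. norm (A *v w) \<le> KA * norm w" using mv_bound by blast
  obtain KD where KD: "KD > 0" "\<And>w. norm (D *v w) \<le> KD * norm w" using mv_bound by blast
  define Mz where "Mz = KA * R + norm u"
  have Mz0: "0 \<le> Mz" if "x \<in> Xset D" for x
    using R[OF that] KA norm_ge_zero[of x] by (simp add: Mz_def) (smt (verit) mult_nonneg_nonneg norm_ge_zero)
  have zb: "\<bar>(A *v x + u)$i\<bar> \<le> Mz" if "x \<in> Xset D" for x i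
  proof -
    have "\<bar>(A *v x + u)$i\<bar> \<le> norm (A *v x + u)" by (rule component_le_norm_cart)
    also have "\<dots> \<le> norm (A *v x) + norm u" by (rule norm_triangle_ineq)
    also have "\<dots> \<le> KA * norm x + norm u" using KA(2)[of x] by simp
    also have "\<dots> \<le> KA * R + norm u" using R[OF that] KA(1) by simp
    finally show ?thesis by (simp add: Mz_def)
  qed
  define K where "K = (\<Sum>i\<in>UNIV. Lam$i$i * (2 * KA + Mz * KD))"
  show ?thesis
  proof (cases "Xset D = {}")
    case True then show ?thesis by (intro exI[of _ 0]) simp
  next
    case False
    then obtain x0 where "x0 \<in> Xset D" by blast
    then have Mz0': "0 \<le> Mz" by (rule Mz0)
    have K0: "K \<ge> 0" unfolding K_def using pos_diag_pos[OF L] KA KD Mz0'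
      by (intro sum_nonneg mult_nonneg_nonneg) (auto simp: less_imp_le)
    show ?thesis
    proof (intro exI[of _ K] conjI ballI K0)
      fix x x' assume x: "x \<in> Xset D" and x': "x' \<in> Xset D"
      have "Vf Lam D A u x' - Vf Lam D A u x =
        (\<Sum>i\<in>UNIV. Lam$i$i * ((max ((A *v x' + u)$i) 0 - (A *v x' + u)$i * (D *v x')$i)
            - (max ((A *v x + u)$i) 0 - (A *v x + u)$i * (D *v x)$i)))"
        unfolding Vf_def sum_subtractf[symmetric] by (simp add: right_diff_distrib)
      also have "\<dots> \<le> (\<Sum>i\<in>UNIV. Lam$i$i * (2 * KA + Mz * KD) * norm (x' - x))"
      proof (rule sum_mono)
        fix i
        have l: "0 < Lam$i$i" using pos_diag_pos[OF L] .
        have yb: "0 \<le> (D *v x')$i" "(D *v x')$i \<le> 1" using x' by (auto simp: Xset_iff)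
        have za: "\<bar>(A *v x' + u)$i - (A *v x + u)$i\<bar> \<le> KA * norm (x' - x)"
        proof -
          have "(A *v x' + u)$i - (A *v x + u)$i = (A *v (x' - x))$i" by (simp add: matrix_vector_mult_diff_distrib)
          then have "\<bar>(A *v x' + u)$i - (A *v x + u)$i\<bar> \<le> norm (A *v (x' - x))" using component_le_norm_cart by metis
          then show ?thesis using KA(2)[of "x' - x"] by linarith
        qed
        have yd: "\<bar>(D *v x')$i - (D *v x)$i\<bar> \<le> KD * norm (x' - x)"
        proof -
          have "(D *v x')$i - (D *v x)$i = (D *v (x' - x))$i" by (simp add: matrix_vector_mult_diff_distrib)
          then have "\<bar>(D *v x')$i - (D *v x)$i\<bar> \<le> norm (D *v (x' - x))" using component_le_norm_cart by metis
          then show ?thesis using KD(2)[of "x' - x"] by linarith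
        qed
        have "\<bar>(A *v x + u)$i\<bar> * \<bar>(D *v x')$i - (D *v x)$i\<bar> \<le> Mz * (KD * norm (x' - x))"
          using zb[OF x, of i] yd by (intro mult_mono) auto
        then have "(max ((A *v x' + u)$i) 0 - (A *v x' + u)$i * (D *v x')$i)
            - (max ((A *v x + u)$i) 0 - (A *v x + u)$i * (D *v x)$i) \<le> (2 * KA + Mz * KD) * norm (x' - x)"
          using scalar_lip[OF yb, of "(A *v x' + u)$i" "(A *v x + u)$i" "(D *v x)$i"] za
          by (simp add: algebra_simps)
        then show "Lam$i$i * ((max ((A *v x' + u)$i) 0 - (A *v x' + u)$i * (D *v x')$i)
            - (max ((A *v x + u)$i) 0 - (A *v x + u)$i * (D *v x)$i)) \<le> Lam$i$i * (2 * KA + Mz * KD) * norm (x' - x)"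
          using l by (simp add: mult.assoc)
      qed
      also have "\<dots> = K * norm (x' - x)" by (simp add: K_def sum_distrib_right)
      finally show "Vf Lam D A u x' - Vf Lam D A u x \<le> K * norm (x' - x)" .
    qed
  qed
qed

lemma Vf_bdd:
  fixes D A Lam :: "real^'n^'n" and u :: "real^'n"
  assumes D: "pos_diag D" and L: "pos_diag Lam"
  shows "\<exists>M. \<forall>x\<in>Xset D. Vf Lam D A u x \<le> M"
proof -
  obtain R where R: "\<And>x. x \<in> Xset D \<Longrightarrow> norm x \<le> R" using X_bound[OF D] by blast
  obtain KA where KA: "KA > 0" "\<And>w. norm (A *v w) \<le> KA * norm w" using mv_bound by blast
  define Mz where "Mz = KA * R + norm u"
  have zb: "\<bar>(A *v x + u)$i\<bar> \<le> Mz" if "x \<in> Xset D" for x i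
  proof -
    have "\<bar>(A *v x + u)$i\<bar> \<le> norm (A *v x + u)" by (rule component_le_norm_cart)
    also have "\<dots> \<le> norm (A *v x) + norm u" by (rule norm_triangle_ineq)
    also have "\<dots> \<le> KA * norm x + norm u" using KA(2)[of x] by simp
    also have "\<dots> \<le> KA * R + norm u" using R[OF that] KA(1) by simp
    finally show ?thesis by (simp add: Mz_def)
  qed
  show ?thesis
  proof (intro exI ballI)
    fix x assume x: "x \<in> Xset D"
    show "Vf Lam D A u x \<le> (\<Sum>i\<in>UNIV. Lam$i$i * (2 * Mz))" unfolding Vf_def
    proof (rule sum_mono)
      fix i
      have yb: "0 \<le> (D *v x)$i" "(D *v x)$i \<le> 1" using x by (auto simp: Xset_iff)
      have "max ((A *v x + u)$i) 0 - (A *v x + u)$i * (D *v x)$i \<le> 2 * Mz"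
        using scalar_lip[OF yb, of "(A *v x + u)$i" 0 0] zb[OF x, of i] by simp
      then show "Lam$i$i * (max ((A *v x + u)$i) 0 - (A *v x + u)$i * (D *v x)$i) \<le> Lam$i$i * (2 * Mz)"
        using pos_diag_pos[OF L, of i] by (intro mult_left_mono) auto
    qed
  qed
qed

lemma isolated_countable:
  fixes S :: "real set"
  assumes iso: "\<And>t. t \<in> S \<Longrightarrow> \<exists>r>0. \<forall>s\<in>S. \<bar>s - t\<bar> < r \<longrightarrow> s = t"
  shows "countable S"
proof -
  have "\<forall>t. \<exists>r>0. t \<in> S \<longrightarrow> (\<forall>s\<in>S. \<bar>s - t\<bar> < r \<longrightarrow> s = t)"
    using iso by (metis zero_less_one)
  then obtain r where r: "\<And>t. r t > 0" and rD: "\<And>t s. t \<in> S \<Longrightarrow> s \<in> S \<Longrightarrow> \<bar>s - t\<bar> < r t \<Longrightarrow> s = t"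
    by metis
  have "\<forall>t. \<exists>q. q \<in> \<rat> \<and> t < q \<and> q < t + r t"
    using Rats_dense_in_real r by (metis less_add_same_cancel1)
  then obtain q where q: "\<And>t. q t \<in> \<rat>" "\<And>t. t < q t" "\<And>t. q t < t + r t" by metis
  have inj: "inj_on q S"
  proof (rule inj_onI)
    fix t t' assume tt: "t \<in> S" "t' \<in> S" "q t = q t'"
    show "t = t'"
    proof (rule linorder_cases[of t t'])
      assume "t < t'"
      then have "\<bar>t' - t\<bar> < r t" using q(2)[of t'] q(3)[of t] tt(3) by simp
      then show ?thesis using rD[OF tt(1,2)] by simp
    next
      assume "t' < t"
      then have "\<bar>t - t'\<bar> < r t'" using q(2)[of t] q(3)[of t'] tt(3) by simp
      then show ?thesis using rD[OF tt(2,1)] by simp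
    qed
  qed
  have "q ` S \<subseteq> \<rat>" using q(1) by blast
  then have "countable (q ` S)" using countable_rat countable_subset by blast
  then show ?thesis using inj countable_image_inj_on by blast
qed

lemma crossing_isolated:
  fixes w :: "real \<Rightarrow> real"
  assumes w: "(w has_real_derivative c) (at t)" and c: "c \<noteq> 0" and w0: "w t = 0"
  shows "\<exists>r>0. \<forall>s. \<bar>s - t\<bar> < r \<longrightarrow> s \<noteq> t \<longrightarrow> w s \<noteq> 0"
proof -
  have "((\<lambda>h. (w (t + h) - w t) / h) \<longlongrightarrow> c) (at 0)" using w by (simp add: DERIV_def)
  then have "eventually (\<lambda>h. dist ((w (t + h) - w t) / h) c < \<bar>c\<bar>) (at 0)"
    using c by (simp add: tendsto_iff)
  then obtain d where d: "d > 0" "\<And>h. h \<noteq> 0 \<Longrightarrow> dist h 0 < d \<Longrightarrow> dist ((w (t + h) - w t) / h) c < \<bar>c\<bar>"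
    unfolding eventually_at by blast
  show ?thesis
  proof (intro exI[of _ d] conjI allI impI d(1))
    fix s assume s: "\<bar>s - t\<bar> < d" "s \<noteq> t"
    have "dist ((w (t + (s - t)) - w t) / (s - t)) c < \<bar>c\<bar>" using d(2)[of "s - t"] s by (simp add: dist_real_def)
    then have "dist (w s / (s - t)) c < \<bar>c\<bar>" using w0 by simp
    then show "w s \<noteq> 0" by (auto simp: dist_real_def)
  qed
qed

lemma exp_diff_bound:
  fixes d a b :: real
  assumes "0 \<le> d" "a \<le> b"
  shows "exp (d * b) - exp (d * a) \<le> d * (b - a) * exp (d * b)"
proof -
  have "1 + (d * a - d * b) \<le> exp (d * a - d * b)" by (rule exp_ge_add_one_self)
  then have "exp (d * b) * (1 + (d * a - d * b)) \<le> exp (d * b) * exp (d * a - d * b)"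
    by (intro mult_left_mono) auto
  also have "exp (d * b) * exp (d * a - d * b) = exp (d * a)" by (simp add: exp_add[symmetric])
  finally show ?thesis by (simp add: algebra_simps)
qed

lemma decay:
  fixes D A Lam :: "real^'n^'n" and u :: "real^'n" and x :: "real \<Rightarrow> real^'n"
  assumes D: "pos_diag D" and C: "lds_cert A Lam" and sol: "is_solution D A u x"
    and s: "0 \<le> s1" "s1 \<le> s2" and dm0: "0 < dm" and dm: "\<And>i. dm \<le> D$i$i"
  shows "Vf Lam D A u (x s2) \<le> exp (- dm * (s2 - s1)) * Vf Lam D A u (x s1)"
proof -
  have L: "pos_diag Lam" using C by (simp add: lds_cert_def)
  have xX: "\<And>t. t \<ge> 0 \<Longrightarrow> x t \<in> Xset D" using sol by (simp add: is_solution_def)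
  have ac: "abs_cont_on 0 s2 x" using sol s by (simp add: is_solution_def)
  have ae: "AE s in lborel. 0 < s \<longrightarrow> (\<exists>v. (x has_vector_derivative v) (at s) \<and> v \<in> Finc D A u (x s))"
    using sol by (simp add: is_solution_def)
  then obtain N where N: "{s \<in> space lborel. \<not> (0 < s \<longrightarrow> (\<exists>v. (x has_vector_derivative v) (at s) \<and> v \<in> Finc D A u (x s)))} \<subseteq> N"
     "emeasure lborel N = 0" "N \<in> sets lborel"
    by (rule AE_E)
  define Ci where "Ci i = {t. \<exists>v. (x has_vector_derivative v) (at t) \<and> (A *v x t + u)$i = 0 \<and> (A *v v)$i \<noteq> 0}" for i
  have cC: "countable (Ci i)" for i
  proof (rule isolated_countable)
    fix t assume "t \<in> Ci i"
    then obtain v where v: "(x has_vector_derivative v) (at t)" "(A *v x t + u)$i = 0" "(A *v v)$i \<noteq> 0"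
      by (auto simp: Ci_def)
    obtain r where r: "r > 0" "\<And>s. \<bar>s - t\<bar> < r \<Longrightarrow> s \<noteq> t \<Longrightarrow> (A *v x s + u)$i \<noteq> 0"
      using crossing_isolated[OF deriv_comp[OF v(1)] v(3) v(2)] by blast
    show "\<exists>r>0. \<forall>s\<in>Ci i. \<bar>s - t\<bar> < r \<longrightarrow> s = t"
      using r by (intro exI[of _ r]) (auto simp: Ci_def)
  qed
  define E where "E = N \<union> {0} \<union> (\<Union>i. Ci i)"
  have "countable ({0} \<union> (\<Union>i. Ci i))" using cC by auto
  then have "({0} \<union> (\<Union>i. Ci i)) \<in> null_sets lborel" by (rule countable_imp_null_set_lborel)
  moreover have "N \<in> null_sets lborel" using N by (simp add: null_sets_def)
  ultimately have "E \<in> null_sets lborel" unfolding E_def by (metis null_sets.Un sup_assoc)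
  then have negE: "negligible E" by (simp add: negligible_iff_null_sets null_sets_completionI)
  define g where "g t = exp (dm * t) * Vf Lam D A u (x t)" for t
  have "g s2 \<le> g s1"
  proof (rule ac_mono[OF s(2) negE])
    fix \<epsilon> :: real assume "\<epsilon> > 0"
    obtain K where K: "K \<ge> 0" "\<And>y y'. y \<in> Xset D \<Longrightarrow> y' \<in> Xset D \<Longrightarrow> Vf Lam D A u y' - Vf Lam D A u y \<le> K * norm (y' - y)"
      using Vf_lip[OF D L, of A u] by blast
    obtain M where M: "\<And>y. y \<in> Xset D \<Longrightarrow> Vf Lam D A u y \<le> M" using Vf_bdd[OF D L, of A u] by blast
    define K1 where "K1 = exp (dm * s2) * K + 1"
    define K2 where "K2 = dm * exp (dm * s2) * max M 0 + 1"
    have "0 \<le> exp (dm * s2) * K" using K(1) by simp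
    then have K1: "K1 > 0" by (simp add: K1_def)
    have "0 \<le> dm * exp (dm * s2) * max M 0" using dm0 by simp
    then have K2: "K2 > 0" by (simp add: K2_def)
    have ep: "\<epsilon> / (2 * K1) > 0" using \<open>\<epsilon> > 0\<close> K1 by simp
    obtain \<delta>x where \<delta>x: "\<delta>x > 0" and \<delta>xD0: "\<forall>(m::nat) (a::nat\<Rightarrow>real) (b::nat\<Rightarrow>real). (\<forall>k<m. 0 \<le> a k \<and> a k \<le> b k \<and> b k \<le> s2) \<longrightarrow>
        (\<forall>j<m. \<forall>k<m. j \<noteq> k \<longrightarrow> b j \<le> a k \<or> b k \<le> a j) \<longrightarrow>
        (\<Sum>k<m. b k - a k) < \<delta>x \<longrightarrow> (\<Sum>k<m. norm (x (b k) - x (a k))) < \<epsilon> / (2 * K1)"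
      using ac ep unfolding abs_cont_on_def by blast
    show "\<exists>\<delta>>0. \<forall>(m::nat) \<alpha> \<beta>. (\<forall>k<m. s1 \<le> \<alpha> k \<and> \<alpha> k \<le> \<beta> k \<and> \<beta> k \<le> s2) \<longrightarrow>
        (\<forall>j<m. \<forall>k<m. j \<noteq> k \<longrightarrow> \<beta> j \<le> \<alpha> k \<or> \<beta> k \<le> \<alpha> j) \<longrightarrow>
        (\<Sum>k<m. \<beta> k - \<alpha> k) < \<delta> \<longrightarrow> (\<Sum>k<m. g (\<beta> k) - g (\<alpha> k)) < \<epsilon>"
    proof (intro exI[of _ "min \<delta>x (\<epsilon> / (2 * K2))"] conjI allI impI)
      show "0 < min \<delta>x (\<epsilon> / (2 * K2))" using \<delta>x \<open>\<epsilon> > 0\<close> K2 by simp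
    next
      fix m :: nat and \<alpha> \<beta> :: "nat \<Rightarrow> real"
      assume c1: "\<forall>k<m. s1 \<le> \<alpha> k \<and> \<alpha> k \<le> \<beta> k \<and> \<beta> k \<le> s2"
        and c2: "\<forall>j<m. \<forall>k<m. j \<noteq> k \<longrightarrow> \<beta> j \<le> \<alpha> k \<or> \<beta> k \<le> \<alpha> j"
        and c3: "(\<Sum>k<m. \<beta> k - \<alpha> k) < min \<delta>x (\<epsilon> / (2 * K2))"
      have c1': "\<forall>k<m. 0 \<le> \<alpha> k \<and> \<alpha> k \<le> \<beta> k \<and> \<beta> k \<le> s2" using c1 s by force
      have c3': "(\<Sum>k<m. \<beta> k - \<alpha> k) < \<delta>x" using c3 by simp
      have sx: "(\<Sum>k<m. norm (x (\<beta> k) - x (\<alpha> k))) < \<epsilon> / (2 * K1)" using \<delta>xD0 c1' c2 c3' by blast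
      have trm: "g (\<beta> k) - g (\<alpha> k) \<le> K1 * norm (x (\<beta> k) - x (\<alpha> k)) + K2 * (\<beta> k - \<alpha> k)" if "k < m" for k
      proof -
        have ab: "s1 \<le> \<alpha> k" "\<alpha> k \<le> \<beta> k" "\<beta> k \<le> s2" using c1 that by auto
        have xa: "x (\<alpha> k) \<in> Xset D" and xb: "x (\<beta> k) \<in> Xset D" using xX ab s by auto
        let ?Va = "Vf Lam D A u (x (\<alpha> k))" and ?Vb = "Vf Lam D A u (x (\<beta> k))"
        have Va0: "0 \<le> ?Va" by (rule Vf_nonneg[OF L xa])
        have VaM: "?Va \<le> max M 0" using M[OF xa] by simp
        have eb: "exp (dm * \<beta> k) \<le> exp (dm * s2)" using ab dm0 by simp
        have "g (\<beta> k) - g (\<alpha> k) = exp (dm * \<beta> k) * (?Vb - ?Va) + (exp (dm * \<beta> k) - exp (dm * \<alpha> k)) * ?Va"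
          by (simp add: g_def algebra_simps)
        also have "exp (dm * \<beta> k) * (?Vb - ?Va) \<le> exp (dm * s2) * (K * norm (x (\<beta> k) - x (\<alpha> k)))"
        proof -
          have "exp (dm * \<beta> k) * (?Vb - ?Va) \<le> exp (dm * \<beta> k) * (K * norm (x (\<beta> k) - x (\<alpha> k)))"
            using K(2)[OF xa xb] by (intro mult_left_mono) auto
          also have "\<dots> \<le> exp (dm * s2) * (K * norm (x (\<beta> k) - x (\<alpha> k)))"
            using eb K(1) by (intro mult_right_mono) auto
          finally show ?thesis .
        qed
        also have "(exp (dm * \<beta> k) - exp (dm * \<alpha> k)) * ?Va \<le> (dm * (\<beta> k - \<alpha> k) * exp (dm * s2)) * max M 0"
        proof (rule mult_mono[OF _ VaM _ Va0])
          have "exp (dm * \<beta> k) - exp (dm * \<alpha> k) \<le> dm * (\<beta> k - \<alpha> k) * exp (dm * \<beta> k)"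
            using exp_diff_bound[of dm "\<alpha> k" "\<beta> k"] dm0 ab by simp
          also have "\<dots> \<le> dm * (\<beta> k - \<alpha> k) * exp (dm * s2)"
            using eb dm0 ab by (intro mult_left_mono) auto
          finally show "exp (dm * \<beta> k) - exp (dm * \<alpha> k) \<le> dm * (\<beta> k - \<alpha> k) * exp (dm * s2)" .
          show "0 \<le> dm * (\<beta> k - \<alpha> k) * exp (dm * s2)" using dm0 ab by simp
        qed
        finally have "g (\<beta> k) - g (\<alpha> k) \<le> exp (dm * s2) * (K * norm (x (\<beta> k) - x (\<alpha> k))) + dm * (\<beta> k - \<alpha> k) * exp (dm * s2) * max M 0"
          by simp
        also have "\<dots> \<le> exp (dm * s2) * (K * norm (x (\<beta> k) - x (\<alpha> k))) + dm * (\<beta> k - \<alpha> k) * exp (dm * s2) * max M 0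
            + (norm (x (\<beta> k) - x (\<alpha> k)) + (\<beta> k - \<alpha> k))"
          using ab norm_ge_zero[of "x (\<beta> k) - x (\<alpha> k)"] by linarith
        also have "\<dots> = K1 * norm (x (\<beta> k) - x (\<alpha> k)) + K2 * (\<beta> k - \<alpha> k)"
          by (simp add: K1_def K2_def algebra_simps)
        finally show ?thesis .
      qed
      have "(\<Sum>k<m. g (\<beta> k) - g (\<alpha> k)) \<le> (\<Sum>k<m. K1 * norm (x (\<beta> k) - x (\<alpha> k)) + K2 * (\<beta> k - \<alpha> k))"
        using trm by (intro sum_mono) auto
      also have "\<dots> = K1 * (\<Sum>k<m. norm (x (\<beta> k) - x (\<alpha> k))) + K2 * (\<Sum>k<m. \<beta> k - \<alpha> k)"
        by (simp add: sum.distrib sum_distrib_left)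
      also have "\<dots> < K1 * (\<epsilon> / (2 * K1)) + K2 * (\<epsilon> / (2 * K2))"
      proof (rule add_less_le_mono)
        show "K1 * (\<Sum>k<m. norm (x (\<beta> k) - x (\<alpha> k))) < K1 * (\<epsilon> / (2 * K1))" using mult_strict_left_mono[OF sx K1] .
        have "(\<Sum>k<m. \<beta> k - \<alpha> k) \<le> \<epsilon> / (2 * K2)" using c3 by simp
        then show "K2 * (\<Sum>k<m. \<beta> k - \<alpha> k) \<le> K2 * (\<epsilon> / (2 * K2))" using K2 by (intro mult_left_mono) auto
      qed
      also have "\<dots> = \<epsilon>" using K1 K2 by simp
      finally show "(\<Sum>k<m. g (\<beta> k) - g (\<alpha> k)) < \<epsilon>" .
    qed
  next
    fix t assume t: "t \<in> {s1..s2} - E"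
    then have t0: "0 < t" using s by (auto simp: E_def)
    have "t \<notin> N" using t by (auto simp: E_def)
    then obtain v where v: "(x has_vector_derivative v) (at t)" "v \<in> Finc D A u (x t)"
      using N(1) t0 by auto
    have z0: "(A *v v)$i = 0" if "(A *v x t + u)$i = 0" for i
    proof (rule ccontr)
      assume "(A *v v)$i \<noteq> 0"
      then have "t \<in> Ci i" using v(1) that by (auto simp: Ci_def)
      then show False using t by (auto simp: E_def)
    qed
    have dV: "((\<lambda>s. Vf Lam D A u (x s)) has_real_derivative Vd Lam D A u (x t) v) (at t)"
      by (rule deriv_Vf[OF v(1) z0])
    have bnd: "Vd Lam D A u (x t) v \<le> - dm * Vf Lam D A u (x t)"
      by (rule Vd_bound[OF D C xX[of t] v(2) z0 dm]) (use t0 in auto)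
    have de: "((\<lambda>s. exp (dm * s)) has_real_derivative exp (dm * t) * dm) (at t)"
      by (auto intro!: derivative_eq_intros)
    have "(g has_real_derivative exp (dm * t) * dm * Vf Lam D A u (x t) + Vd Lam D A u (x t) v * exp (dm * t)) (at t)"
      unfolding g_def[abs_def] by (rule DERIV_mult[OF de dV])
    moreover have "exp (dm * t) * dm * Vf Lam D A u (x t) + Vd Lam D A u (x t) v * exp (dm * t) \<le> 0"
    proof -
      have "exp (dm * t) * dm * Vf Lam D A u (x t) + Vd Lam D A u (x t) v * exp (dm * t)
          = exp (dm * t) * (dm * Vf Lam D A u (x t) + Vd Lam D A u (x t) v)" by (simp add: algebra_simps)
      moreover have "dm * Vf Lam D A u (x t) + Vd Lam D A u (x t) v \<le> 0" using bnd by simp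
      ultimately show ?thesis by (simp add: mult_nonneg_nonpos)
    qed
    ultimately show "\<exists>g'. (g has_real_derivative g') (at t) \<and> g' \<le> 0" by blast
  qed
  then have "exp (dm * s2) * Vf Lam D A u (x s2) \<le> exp (dm * s1) * Vf Lam D A u (x s1)" by (simp add: g_def)
  then have "exp (- dm * s2) * (exp (dm * s2) * Vf Lam D A u (x s2)) \<le> exp (- dm * s2) * (exp (dm * s1) * Vf Lam D A u (x s1))"
    by (intro mult_left_mono) auto
  then show ?thesis by (simp add: mult.assoc[symmetric] exp_add[symmetric] algebra_simps)
qed

lemma cont_z: "continuous_on UNIV (\<lambda>x::real^'n. ((M::real^'n^'n) *v x + c) $ i)"
proof -
  have "continuous_on UNIV (\<lambda>x::real^'n. (M *v x) $ i + c $ i)"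
    by (intro continuous_on_add continuous_on_mv continuous_on_const)
  then show ?thesis by simp
qed

lemma Vf_cont: "continuous_on UNIV (Vf Lam D A u)"
proof -
  have "continuous_on UNIV (\<lambda>x. \<Sum>i\<in>UNIV. Lam$i$i * (max ((A *v x + u)$i) 0 - (A *v x + u)$i * (D *v x + 0)$i))"
    by (intro continuous_on_sum continuous_on_mult continuous_on_const continuous_on_diff continuous_on_max cont_z)
  then show ?thesis unfolding Vf_def[abs_def] by simp
qed

lemma Xset_compact:
  assumes D: "pos_diag D"
  shows "compact (Xset D)"
proof -
  have "closed (Xset D)"
  proof -
    have "Xset D = {x. \<forall>i. 0 \<le> (D *v x + 0)$i \<and> (D *v x + 0)$i \<le> 1}" by (simp add: Xset_def)
    also have "closed \<dots>"
      by (intro closed_Collect_all closed_Collect_conj closed_Collect_le cont_z continuous_on_const)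
    finally show ?thesis .
  qed
  moreover have "bounded (Xset D)" using X_bound[OF D] by (simp add: bounded_iff)
  ultimately show ?thesis by (simp add: compact_eq_bounded_closed)
qed

lemma sublevel:
  assumes D: "pos_diag D" and L: "pos_diag Lam" and C: "lds_cert A Lam"
    and xs: "is_equilibrium D A u xs" and e: "\<epsilon> > 0"
  shows "\<exists>\<eta>>0. \<forall>y\<in>Xset D. Vf Lam D A u y < \<eta> \<longrightarrow> norm (y - xs) < \<epsilon>"
proof -
  define S where "S = Xset D \<inter> {y. \<epsilon> \<le> norm (y - xs)}"
  have "closed {y. \<epsilon> \<le> norm (y - xs)}"
    by (intro closed_Collect_le continuous_intros)
  then have cS: "compact S" unfolding S_def using Xset_compact[OF D] by (simp add: compact_Int_closed)
  show ?thesis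
  proof (cases "S = {}")
    case True
    then show ?thesis by (intro exI[of _ 1]) (auto simp: S_def not_le)
  next
    case False
    obtain y0 where y0: "y0 \<in> S" "\<And>y. y \<in> S \<Longrightarrow> Vf Lam D A u y0 \<le> Vf Lam D A u y"
      using continuous_attains_inf[OF cS False continuous_on_subset[OF Vf_cont]] by blast
    have y0X: "y0 \<in> Xset D" using y0 by (simp add: S_def)
    have "Vf Lam D A u y0 \<noteq> 0"
    proof
      assume "Vf Lam D A u y0 = 0"
      then have "is_equilibrium D A u y0" using Vf_zero_iff[OF L y0X] by simp
      then have "y0 = xs" using equil_unique[OF D C _ xs] by blast
      then show False using y0(1) e by (simp add: S_def)
    qed
    then have pos: "Vf Lam D A u y0 > 0" using Vf_nonneg[OF L y0X, of A u] by simp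
    show ?thesis
    proof (intro exI[of _ "Vf Lam D A u y0"] conjI ballI impI pos)
      fix y assume "y \<in> Xset D" "Vf Lam D A u y < Vf Lam D A u y0"
      then show "norm (y - xs) < \<epsilon>" using y0(2)[of y] by (force simp: S_def)
    qed
  qed
qed

theorem theorem2:
  fixes D W Lam :: "real^'n^'n" and u :: "real^'n"
  assumes "pos_diag D"
    and "lds_cert (W - D) Lam"
  shows "(\<exists>!xs. is_equilibrium D (W - D) u xs)
    \<and> (\<forall>xs. is_equilibrium D (W - D) u xs \<longrightarrow> strongly_GAS D (W - D) u xs)
    \<and> (\<forall>x. is_solution D (W - D) u x \<longrightarrow>
         (\<forall>s1 s2. 0 \<le> s1 \<longrightarrow> s1 \<le> s2 \<longrightarrow>
            V_inf D (W - D) u Lam (x s2)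
              \<le> exp (- (Min (range (\<lambda>i. D$i$i))) * (s2 - s1)) * V_inf D (W - D) u Lam (x s1)))"
proof -
  note D = assms(1) and C = assms(2)
  define A where "A = W - D"
  have C': "lds_cert A Lam" using C by (simp add: A_def)
  have L: "pos_diag Lam" using C by (simp add: lds_cert_def)
  define dm where "dm = Min (range (\<lambda>i. D$i$i))"
  have dmle: "dm \<le> D$i$i" for i unfolding dm_def by (rule Min_le) auto
  have "dm \<in> range (\<lambda>i. D$i$i)" unfolding dm_def by (rule Min_in) auto
  then have dm0: "dm > 0" using pos_diag_pos[OF D] by auto
  have dec: "Vf Lam D A u (x s2) \<le> exp (- dm * (s2 - s1)) * Vf Lam D A u (x s1)"
    if "is_solution D A u x" "0 \<le> s1" "s1 \<le> s2" for x s1 s2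
    by (rule decay[OF D C' that dm0 dmle])
  have dec0: "Vf Lam D A u (x t) \<le> exp (- dm * t) * Vf Lam D A u (x 0)"
    if "is_solution D A u x" "0 \<le> t" for x t
    using dec[OF that(1) order_refl that(2)] by simp
  have P1: "\<exists>!xs. is_equilibrium D A u xs"
    using equil_exists[OF D, of A u] equil_unique[OF D C'] by blast
  have P2: "strongly_GAS D A u xs" if xs: "is_equilibrium D A u xs" for xs
  proof -
    have xsX: "xs \<in> Xset D" using xs by (simp add: is_equilibrium_def)
    have V0: "Vf Lam D A u xs = 0" using Vf_zero_iff[OF L xsX] xs by simp
    have conv: "(x \<longlongrightarrow> xs) at_top" if sol: "is_solution D A u x" for x
    proof (rule tendstoI)
      fix \<epsilon> :: real assume "\<epsilon> > 0"
      obtain \<eta> where \<eta>: "\<eta> > 0" "\<And>y. y \<in> Xset D \<Longrightarrow> Vf Lam D A u y < \<eta> \<Longrightarrow> norm (y - xs) < \<epsilon>"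
        using sublevel[OF D L C' xs \<open>\<epsilon> > 0\<close>] by blast
      have "filterlim (\<lambda>t. (- dm) * t) at_bot at_top"
        by (rule filterlim_tendsto_neg_mult_at_bot[OF tendsto_const _ filterlim_ident]) (use dm0 in simp)
      then have "((\<lambda>t. exp ((- dm) * t)) \<longlongrightarrow> 0) at_top"
        by (rule filterlim_compose[OF exp_at_bot])
      then have "((\<lambda>t. exp ((- dm) * t) * Vf Lam D A u (x 0)) \<longlongrightarrow> 0) at_top"
        by (rule tendsto_mult_left_zero)
      then have ev1: "eventually (\<lambda>t. exp ((- dm) * t) * Vf Lam D A u (x 0) < \<eta>) at_top"
        using \<eta>(1) by (rule order_tendstoD(2))
      show "eventually (\<lambda>t. dist (x t) xs < \<epsilon>) at_top"
        using ev1 eventually_ge_at_top[of 0]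
      proof eventually_elim
        case (elim t)
        have xt: "x t \<in> Xset D" using sol elim(2) by (simp add: is_solution_def)
        have "Vf Lam D A u (x t) < \<eta>" using dec0[OF sol elim(2)] elim(1) by simp
        then show ?case using \<eta>(2)[OF xt] by (simp add: dist_norm)
      qed
    qed
    have stab: "\<exists>\<delta>>0. \<forall>x. is_solution D A u x \<longrightarrow> norm (x 0 - xs) < \<delta> \<longrightarrow> (\<forall>t\<ge>0. norm (x t - xs) < \<epsilon>)"
      if e: "\<epsilon> > 0" for \<epsilon>
    proof -
      obtain \<eta> where \<eta>: "\<eta> > 0" "\<And>y. y \<in> Xset D \<Longrightarrow> Vf Lam D A u y < \<eta> \<Longrightarrow> norm (y - xs) < \<epsilon>"
        using sublevel[OF D L C' xs e] by blast
      obtain \<delta> where \<delta>: "\<delta> > 0" "\<And>y. dist y xs < \<delta> \<Longrightarrow> dist (Vf Lam D A u y) (Vf Lam D A u xs) < \<eta>"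
        using Vf_cont[of Lam D A u] \<eta>(1) unfolding continuous_on_iff by blast
      show ?thesis
      proof (intro exI[of _ \<delta>] conjI allI impI \<delta>(1))
        fix x and t :: real assume sol: "is_solution D A u x" and x0: "norm (x 0 - xs) < \<delta>" and t: "0 \<le> t"
        have x0X: "x 0 \<in> Xset D" and xt: "x t \<in> Xset D" using sol t by (simp_all add: is_solution_def)
        have "Vf Lam D A u (x 0) < \<eta>" using \<delta>(2)[of "x 0"] x0 V0 Vf_nonneg[OF L x0X] by (simp add: dist_norm)
        moreover have "exp (- dm * t) \<le> 1" using dm0 t by simp
        then have "exp (- dm * t) * Vf Lam D A u (x 0) \<le> Vf Lam D A u (x 0)"
          using Vf_nonneg[OF L x0X] by (simp add: mult_left_le_one_le)
        ultimately have "Vf Lam D A u (x t) < \<eta>" using dec0[OF sol t] by linarith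
        then show "norm (x t - xs) < \<epsilon>" using \<eta>(2)[OF xt] by simp
      qed
    qed
    show ?thesis unfolding strongly_GAS_def using conv stab by blast
  qed
  have P3: "V_inf D A u Lam (x s2) \<le> exp (- dm * (s2 - s1)) * V_inf D A u Lam (x s1)"
    if "is_solution D A u x" "0 \<le> s1" "s1 \<le> s2" for x s1 s2
    using dec[OF that] by (simp add: V_inf_eq[OF L])
  show ?thesis using P1 P2 P3 unfolding A_def dm_def by blast
qed

end
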